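(* Let $\Bbbk$ be a field, $n\ge 3$, $q\in\Bbbk$ a root of unity such that $q^2$ has order $n$, and $\gamma\in\Bbbk$. In the setting described in the context, the algebra $\mathrm{R}_{\mathcal{B}}(A_\gamma)=H\otimes A_\gamma$ in ${}^H_H\mathbf{YD}(\mathcal{B})$, with $\mathbf{y}:=y\otimes 1_A$ and $\mathbf{u}:=1_H\otimes u$ (where $H$ is written as $\Bbbk[y]/(y^n)$ in this tensor factor) and $\mathbf{1}=1_H\otimes 1_A$, has the $\Bbbk$-algebra presentation $$\Bbbk\langle\mathbf{y},\mathbf{u}\rangle/(\mathbf{y}^n,\ \mathbf{u}\mathbf{y}-q^{-2}\mathbf{y}\mathbf{u}).$$ Its $K$-action is $g\cdot\mathbf{y}=q^{-2}\mathbf{y}$, $g\cdot\mathbf{u}=q^2\mathbf{u}$, and its Yetter–Drinfeld structure is given by $$a^{\mathrm{R}}(x\otimes\mathbf{y})=(1-q^2)\mathbf{y}^2,\quad a^{\mathrm{R}}(x\otimes\mathbf{u})=(1-q^{-4})\mathbf{y}\mathbf{u}+\gamma\mathbf{1},\quad \delta^{\mathrm{R}}(\mathbf{y})=1_H\otimes\mathbf{y}+x\otimes 1_A,\quad \delta^{\mathrm{R}}(\mathbf{u})=1_H\otimes\mathbf{u}.$$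
   Context: $K=\Bbbk\mathbb{Z}_n$ with $\mathbb{Z}_n=\langle g\mid g^n=1\rangle$, quasi-triangular with $\mathcal{R}=\frac1n\sum_{i,j=0}^{n-1}q^{-2ij}g^i\otimes g^j$. $\mathcal{B}=K\text{-}\mathbf{Mod}$ with braiding $\Psi(v\otimes w)=R^{(2)}w\otimes R^{(1)}v$, which for $g\cdot v=q^{2|v|}v$, $g\cdot w=q^{2|w|}w$ equals $q^{2|v||w|}w\otimes v$. $H=\Bbbk[x]/(x^n)$ is a Hopf algebra in $\mathcal{B}$ with $g\cdot x=q^{-2}x$, $\Delta(x^m)=\sum_{i=0}^m\binom{m}{i}_{q^2}x^i\otimes x^{m-i}$ where $\binom{m}{i}_{q^2}=\prod_{j=0}^{i-1}\frac{1-q^{2(i-j)}}{1-q^{2(j+1)}}$, $\varepsilon(x^m)=\delta_{m,0}$, $S(x^m)=(-1)^mq^{2\binom{m}{2}}x^m$. $\mathcal{C}=H\text{-}\mathbf{Mod}(\mathcal{B})$ (left $H$-modules in $\mathcal{B}$, tensor product action via $\Delta$ and $\Psi$). $A_\gamma=\Bbbk[u]$ is the algebra in $\mathcal{C}$ with $g\cdot u=q^2u$ and $x\cdot u=\gamma 1_A$ (action on higher powers determined by the module-algebra condition in $\mathcal{C}$). For an algebra $A$ in $\mathcal{C}$, $\mathrm{R}_{\mathcal{B}}(A)$ is $H\otimes A$ with the tensor product algebra structure in $\mathcal{B}$, product $(m_H\otimes m_A)(\mathrm{Id}_H\otimes\Psi_{A,H}\otimes\mathrm{Id}_A)$, $K$-action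 diagonal, $H$-action $a^{\mathrm{R}}=(m\otimes\mathrm{Id}_A)(\mathrm{Id}_H\otimes\Psi_{A,H})(\mathrm{Id}_H\otimes a_A\otimes S)(\mathrm{Id}_{H\otimes H}\otimes\Psi_{H,A})(m\otimes\Delta\otimes\mathrm{Id}_A)(\mathrm{Id}_H\otimes\Psi_{H,H}\otimes\mathrm{Id}_A)(\Delta\otimes\mathrm{Id}_{H\otimes A})$ and $H$-coaction $\delta^{\mathrm{R}}=\Delta\otimes\mathrm{Id}_A$; it is an algebra in the category ${}^H_H\mathbf{YD}(\mathcal{B})$ of $H$-Yetter–Drinfeld modules in $\mathcal{B}$. *)

theory Defs
  imports Main
begin

text \<open>Vectors in a vector space with basis indexed by type 'b are functions 'b => 'k
  (finitely supported). A linear map is given by its values on basis vectors.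
  Basis of H = k[x]/(x^n): x^i (index i, valid for i < n), degree -i (g acts by q^(-2i)).
  Basis of A_gamma = k[u]: u^b (index b), degree b (g acts by q^(2b)).\<close>

definition kd :: "'a \<Rightarrow> 'a \<Rightarrow> 'k::field" where
  "kd a c = (if a = c then 1 else 0)"

definition bas :: "'a \<Rightarrow> 'a \<Rightarrow> 'k::field" where
  "bas a = (\<lambda>c. if c = a then 1 else 0)"

definition lin_app :: "('b \<Rightarrow> 'c \<Rightarrow> 'k::field) \<Rightarrow> ('b \<Rightarrow> 'k) \<Rightarrow> ('c \<Rightarrow> 'k)" where
  "lin_app L v = (\<lambda>c. \<Sum>b\<in>{b. v b \<noteq> 0}. v b * L b c)"

definition tvec :: "('a \<Rightarrow> 'k::field) \<Rightarrow> ('b \<Rightarrow> 'k) \<Rightarrow> ('a \<times> 'b \<Rightarrow> 'k)" where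
  "tvec v w = (\<lambda>(a, b). v a * w b)"

definition smul :: "'k::field \<Rightarrow> ('a \<Rightarrow> 'k) \<Rightarrow> ('a \<Rightarrow> 'k)" where
  "smul c v = (\<lambda>a. c * v a)"

definition hvec :: "nat \<Rightarrow> nat \<Rightarrow> nat \<Rightarrow> 'k::field" where
  "hvec n i = (\<lambda>k. if k = i \<and> i < n then 1 else 0)"

definition mulH :: "nat \<Rightarrow> nat \<times> nat \<Rightarrow> nat \<Rightarrow> 'k::field" where
  "mulH n = (\<lambda>(i, j). hvec n (i + j))"

definition qbinom :: "'k::field \<Rightarrow> nat \<Rightarrow> nat \<Rightarrow> 'k" where
  "qbinom Q m i = (\<Prod>j<i. (1 - Q ^ (m - j)) / (1 - Q ^ (j + 1)))"

definition dltH :: "'k::field \<Rightarrow> nat \<Rightarrow> nat \<Rightarrow> nat \<times> nat \<Rightarrow> 'k" where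
  "dltH q n m = (\<lambda>(i, j). if m < n \<and> i + j = m then qbinom (q^2) m i else 0)"

definition antipH :: "'k::field \<Rightarrow> nat \<Rightarrow> nat \<Rightarrow> nat \<Rightarrow> 'k" where
  "antipH q n m = (\<lambda>k. if k = m \<and> m < n then (-1) ^ m * q ^ (2 * (m choose 2)) else 0)"

section \<open>Braidings Psi(v \<otimes> w) = q^(2|v||w|) w \<otimes> v\<close>

definition psiHH :: "'k::field \<Rightarrow> nat \<times> nat \<Rightarrow> nat \<times> nat \<Rightarrow> 'k" where
  "psiHH q = (\<lambda>(i, j) (a, c). if a = j \<and> c = i
      then q powi (2 * (- int i) * (- int j)) else 0)"

definition psiHA :: "'k::field \<Rightarrow> nat \<times> nat \<Rightarrow> nat \<times> nat \<Rightarrow> 'k" where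
  "psiHA q = (\<lambda>(i, b) (b', i'). if b' = b \<and> i' = i
      then q powi (2 * (- int i) * int b) else 0)"

definition psiAH :: "'k::field \<Rightarrow> nat \<times> nat \<Rightarrow> nat \<times> nat \<Rightarrow> 'k" where
  "psiAH q = (\<lambda>(b, i) (i', b'). if i' = i \<and> b' = b
      then q powi (2 * int b * (- int i)) else 0)"

text \<open>x . u^m, determined by x . u = gamma 1 and the module-algebra condition in C:
  x.(u u^m) = (x.u) u^m + q^(-2) u (x.u^m), and x.1 = 0.\<close>
primrec xu :: "'k::field \<Rightarrow> 'k \<Rightarrow> nat \<Rightarrow> nat \<Rightarrow> 'k" where
  "xu q \<gamma> 0 = (\<lambda>k. 0)"
| "xu q \<gamma> (Suc m) = (\<lambda>k. \<gamma> * kd k m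
      + q powi (-2) * (case k of 0 \<Rightarrow> 0 | Suc k' \<Rightarrow> xu q \<gamma> m k'))"

primrec actAit :: "'k::field \<Rightarrow> 'k \<Rightarrow> nat \<Rightarrow> nat \<Rightarrow> nat \<Rightarrow> 'k" where
  "actAit q \<gamma> 0 b = bas b"
| "actAit q \<gamma> (Suc i) b = lin_app (xu q \<gamma>) (actAit q \<gamma> i b)"

definition actA :: "'k::field \<Rightarrow> 'k \<Rightarrow> nat \<times> nat \<Rightarrow> nat \<Rightarrow> 'k" where
  "actA q \<gamma> = (\<lambda>(i, b). actAit q \<gamma> i b)"

section \<open>R_B(A_gamma) = H \<otimes> A_gamma, basis (i,b) <-> x^i \<otimes> u^b\<close>

definition Rcar :: "nat \<Rightarrow> (nat \<times> nat \<Rightarrow> 'k::field) set" where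
  "Rcar n = {v. finite {p. v p \<noteq> 0} \<and> (\<forall>i b. v (i, b) \<noteq> 0 \<longrightarrow> i < n)}"

text \<open>Product (m_H \<otimes> m_A)(Id_H \<otimes> Psi_{A,H} \<otimes> Id_A).\<close>
definition mRa :: "'k::field \<Rightarrow> (nat \<times> nat) \<times> (nat \<times> nat) \<Rightarrow> nat \<times> nat \<times> nat \<times> nat \<Rightarrow> 'k" where
  "mRa q = (\<lambda>((i, b), (j, d)) (i', j', b', d'). kd i' i * psiAH q (b, j) (j', b') * kd d' d)"

definition mRb :: "nat \<Rightarrow> nat \<times> nat \<times> nat \<times> nat \<Rightarrow> nat \<times> nat \<Rightarrow> 'k::field" where
  "mRb n = (\<lambda>(i, j, b, d) (k, e). mulH n (i, j) k * kd e (b + d))"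

definition prodR :: "'k::field \<Rightarrow> nat \<Rightarrow> (nat \<times> nat \<Rightarrow> 'k) \<Rightarrow> (nat \<times> nat \<Rightarrow> 'k) \<Rightarrow> (nat \<times> nat \<Rightarrow> 'k)" where
  "prodR q n v w = lin_app (mRb n) (lin_app (mRa q) (tvec v w))"

primrec powR :: "'k::field \<Rightarrow> nat \<Rightarrow> (nat \<times> nat \<Rightarrow> 'k) \<Rightarrow> nat \<Rightarrow> (nat \<times> nat \<Rightarrow> 'k)" where
  "powR q n v 0 = bas (0, 0)"
| "powR q n v (Suc m) = prodR q n v (powR q n v m)"

definition gR :: "'k::field \<Rightarrow> (nat \<times> nat \<Rightarrow> 'k) \<Rightarrow> (nat \<times> nat \<Rightarrow> 'k)" where
  "gR q v = (\<lambda>(i, b). q powi (2 * (int b - int i)) * v (i, b))"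

text \<open>The H-action a^R, as the composite of the seven maps of the context
  (applied right to left), on basis vectors h \<otimes> (x^i \<otimes> u^b).\<close>
definition st1 :: "'k::field \<Rightarrow> nat \<Rightarrow> nat \<times> nat \<times> nat \<Rightarrow> nat \<times> nat \<times> nat \<times> nat \<Rightarrow> 'k" where
  "st1 q n = (\<lambda>(h, i, b) (h1, h2, i', b'). dltH q n h (h1, h2) * kd i' i * kd b' b)"
definition st2 :: "'k::field \<Rightarrow> nat \<times> nat \<times> nat \<times> nat \<Rightarrow> nat \<times> nat \<times> nat \<times> nat \<Rightarrow> 'k" where
  "st2 q = (\<lambda>(h1, h2, i, b) (a1, a2, a3, b'). kd a1 h1 * psiHH q (h2, i) (a2, a3) * kd b' b)"
definition st3 :: "'k::field \<Rightarrow> nat \<Rightarrow> nat \<times> nat \<times> nat \<times> nat \<Rightarrow> nat \<times> nat \<times> nat \<times> nat \<Rightarrow> 'k" where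
  "st3 q n = (\<lambda>(h1, i, h2, b) (c1, c2, c3, b'). mulH n (h1, i) c1 * dltH q n h2 (c2, c3) * kd b' b)"
definition st4 :: "'k::field \<Rightarrow> nat \<times> nat \<times> nat \<times> nat \<Rightarrow> nat \<times> nat \<times> nat \<times> nat \<Rightarrow> 'k" where
  "st4 q = (\<lambda>(c1, c2, c3, b) (d1, d2, b', d3). kd d1 c1 * kd d2 c2 * psiHA q (c3, b) (b', d3))"
definition st5 :: "'k::field \<Rightarrow> nat \<Rightarrow> 'k \<Rightarrow> nat \<times> nat \<times> nat \<times> nat \<Rightarrow> nat \<times> nat \<times> nat \<Rightarrow> 'k" where
  "st5 q n \<gamma> = (\<lambda>(d1, d2, b, d3) (e1, b', e3). kd e1 d1 * actA q \<gamma> (d2, b) b' * antipH q n d3 e3)"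
definition st6 :: "'k::field \<Rightarrow> nat \<times> nat \<times> nat \<Rightarrow> nat \<times> nat \<times> nat \<Rightarrow> 'k" where
  "st6 q = (\<lambda>(e1, b, e3) (f1, f2, b'). kd f1 e1 * psiAH q (b, e3) (f2, b'))"
definition st7 :: "nat \<Rightarrow> nat \<times> nat \<times> nat \<Rightarrow> nat \<times> nat \<Rightarrow> 'k::field" where
  "st7 n = (\<lambda>(f1, f2, b) (g, b'). mulH n (f1, f2) g * kd b' b)"

definition aR :: "'k::field \<Rightarrow> nat \<Rightarrow> 'k \<Rightarrow> nat \<Rightarrow> (nat \<times> nat \<Rightarrow> 'k) \<Rightarrow> (nat \<times> nat \<Rightarrow> 'k)" where
  "aR q n \<gamma> h v = lin_app (st7 n) (lin_app (st6 q) (lin_app (st5 q n \<gamma>)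
     (lin_app (st4 q) (lin_app (st3 q n) (lin_app (st2 q)
       (lin_app (st1 q n) (tvec (hvec n h) v)))))))"

text \<open>Coaction delta^R = Delta \<otimes> Id_A : H \<otimes> A \<rightarrow> H \<otimes> (H \<otimes> A).\<close>
definition deltaR :: "'k::field \<Rightarrow> nat \<Rightarrow> (nat \<times> nat \<Rightarrow> 'k) \<Rightarrow> (nat \<times> nat \<times> nat \<Rightarrow> 'k)" where
  "deltaR q n v = lin_app (\<lambda>(i, b) (h, i', b'). dltH q n i (h, i') * kd b' b) v"

section \<open>k-algebras as rings with a central ring homomorphism from k\<close>

definition central_hom :: "('k::field \<Rightarrow> 'b::ring_1) \<Rightarrow> bool" where
  "central_hom \<phi> \<longleftrightarrow> (\<forall>a c. \<phi> (a + c) = \<phi> a + \<phi> c) \<and> (\<forall>a c. \<phi> (a * c) = \<phi> a * \<phi> c)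
     \<and> \<phi> 1 = 1 \<and> (\<forall>a x. \<phi> a * x = x * \<phi> a)"

definition R_alg_hom :: "'k::field \<Rightarrow> nat \<Rightarrow> ('k \<Rightarrow> 'b::ring_1) \<Rightarrow> ((nat \<times> nat \<Rightarrow> 'k) \<Rightarrow> 'b) \<Rightarrow> bool" where
  "R_alg_hom q n \<phi> f \<longleftrightarrow>
     (\<forall>v\<in>Rcar n. \<forall>w\<in>Rcar n. f (\<lambda>p. v p + w p) = f v + f w)
   \<and> (\<forall>c. \<forall>v\<in>Rcar n. f (smul c v) = \<phi> c * f v)
   \<and> (\<forall>v\<in>Rcar n. \<forall>w\<in>Rcar n. f (prodR q n v w) = f v * f w)
   \<and> f (bas (0, 0)) = 1"

end

theory Submission
  imports Defs
begin


definition fs :: "('a \<Rightarrow> 'k::field) \<Rightarrow> bool" where "fs v \<longleftrightarrow> finite {p. v p \<noteq> 0}"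

lemma lin_app_sup: assumes "finite S" "{b. v b \<noteq> 0} \<subseteq> S"
  shows "lin_app L v z = (\<Sum>b\<in>S. v b * L b z)"
  unfolding lin_app_def by (rule sum.mono_neutral_left) (use assms in auto)

lemma lin_app_bas: "lin_app L (bas a) = L a"
proof -
  have "{b. (bas a b :: 'k::field) \<noteq> 0} = {a}" by (auto simp: bas_def)
  then show ?thesis unfolding lin_app_def by (auto simp: bas_def)
qed

lemma lin_app_scal: "lin_app L (\<lambda>p. c * v p) = (\<lambda>z. c * lin_app L v z)"
proof (cases "c = 0")
  case True then show ?thesis by (simp add: lin_app_def)
next
  case False
  then have "{b. c * v b \<noteq> 0} = {b. v b \<noteq> 0}" by auto
  then show ?thesis unfolding lin_app_def by (simp add: sum_distrib_left mult.assoc)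
qed

lemma lin_app_add: assumes "fs v" "fs w"
  shows "lin_app L (\<lambda>p. v p + w p) = (\<lambda>z. lin_app L v z + lin_app L w z)"
proof
  fix z
  let ?S = "{p. v p \<noteq> 0} \<union> {p. w p \<noteq> 0}"
  have f: "finite ?S" using assms by (auto simp: fs_def)
  show "lin_app L (\<lambda>p. v p + w p) z = lin_app L v z + lin_app L w z"
    by (subst (1 2 3) lin_app_sup[OF f]) (auto simp: sum.distrib distrib_right)
qed

lemma lin_app_diff: assumes "fs v" "fs w"
  shows "lin_app L (\<lambda>p. v p - w p) = (\<lambda>z. lin_app L v z - lin_app L w z)"
proof
  fix z
  let ?S = "{p. v p \<noteq> 0} \<union> {p. w p \<noteq> 0}"
  have f: "finite ?S" using assms by (auto simp: fs_def)
  show "lin_app L (\<lambda>p. v p - w p) z = lin_app L v z - lin_app L w z"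
    by (subst (1 2 3) lin_app_sup[OF f]) (auto simp: sum_subtractf left_diff_distrib)
qed

lemma lin_app_neg: "lin_app L (\<lambda>p. - v p) = (\<lambda>z. - lin_app L v z)"
  using lin_app_scal[of L "-1" v] by simp

lemma fs_diff[simp]: "fs v \<Longrightarrow> fs w \<Longrightarrow> fs (\<lambda>p. v p - w p)"
  unfolding fs_def by (rule finite_subset[of _ "{p. v p \<noteq> 0} \<union> {p. w p \<noteq> 0}"]) auto

lemma fs_neg[simp]: "fs v \<Longrightarrow> fs (\<lambda>p. - v p)"
  unfolding fs_def by simp

lemma fs_bas[simp]: "fs (bas a :: 'a \<Rightarrow> 'k::field)"
proof -
  have "{b. (bas a b :: 'k::field) \<noteq> 0} = {a}" by (auto simp: bas_def)
  then show ?thesis by (simp add: fs_def)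
qed

lemma fs_add[simp]: "fs v \<Longrightarrow> fs w \<Longrightarrow> fs (\<lambda>p. v p + w p)"
  unfolding fs_def by (rule finite_subset[of _ "{p. v p \<noteq> 0} \<union> {p. w p \<noteq> 0}"]) auto

lemma fs_scal[simp]: "fs v \<Longrightarrow> fs (\<lambda>p. c * v p)"
  unfolding fs_def by (rule finite_subset[of _ "{p. v p \<noteq> 0}"]) auto

lemma lin_app_zero[simp]: "lin_app L (\<lambda>p. 0) = (\<lambda>z. 0)"
  by (simp add: lin_app_def)

lemma tvec_bas: "tvec (bas a) (bas b) = bas (a,b)"
  by (auto simp: tvec_def bas_def fun_eq_iff)

lemma mRa_bas: "mRa q ((i,b),(j,d)) = (\<lambda>z. q powi (2*int b*(-int j)) * bas (i,j,b,d) z)"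
  by (auto simp: mRa_def psiAH_def kd_def bas_def fun_eq_iff)

lemma mRb_bas: "mRb n (i,j,b,d) = (\<lambda>z. (if i+j<n then 1 else 0) * bas (i+j,b+d) z)"
  by (auto simp: mRb_def mulH_def hvec_def kd_def bas_def fun_eq_iff)

lemma prodR_bas: "prodR q n (bas (i,b)) (bas (j,d)) =
   (\<lambda>z. (q powi (2*int b*(-int j)) * (if i+j<n then 1 else 0)) * bas (i+j,b+d) z)"
  unfolding prodR_def tvec_bas lin_app_bas mRa_bas lin_app_scal mRb_bas by (simp add: mult.assoc)

lemma powR_Y: "m < n \<Longrightarrow> powR q n (bas (1,0)) m = bas (m,0)"
  by (induction m) (auto simp: prodR_bas)

lemma powR_Y_n: "0 < n \<Longrightarrow> powR q n (bas (1,0)) n = (\<lambda>_. 0)"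
proof (cases n)
  case (Suc m)
  then have "powR q n (bas (1,0)) m = bas (m,0)" by (intro powR_Y) auto
  then show ?thesis using Suc by (simp add: prodR_bas)
qed auto

lemma powR_U: "0 < n \<Longrightarrow> powR q n (bas (0,1)) m = bas (0,m)"
  by (induction m) (auto simp: prodR_bas)

lemma qb10: "qbinom Q (Suc 0) 0 = 1" by (simp add: qbinom_def)
lemma qb00: "qbinom Q 0 0 = 1" by (simp add: qbinom_def)
lemma qb11: "Q \<noteq> 1 \<Longrightarrow> qbinom Q (Suc 0) (Suc 0) = 1" by (simp add: qbinom_def)

lemma hvec_bas: "i < n \<Longrightarrow> hvec n i = bas i"
  by (auto simp: hvec_def bas_def fun_eq_iff)

lemma st1_1: "1 < n \<Longrightarrow> q^2 \<noteq> 1 \<Longrightarrow> st1 q n (Suc 0,i,b) = (\<lambda>p. bas (0,Suc 0,i,b) p + bas (Suc 0,0,i,b) p)"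
  apply (auto simp: st1_def dltH_def kd_def bas_def fun_eq_iff qb10 qb11)
  done

lemma st1_0: "0 < n \<Longrightarrow> st1 q n (0,i,b) = bas (0,0,i,b)"
  by (auto simp: st1_def dltH_def kd_def bas_def fun_eq_iff qb00)

lemma st2_b: "st2 q (h1,h2,i,b) = (\<lambda>p. q powi (2*(-int h2)*(-int i)) * bas (h1,i,h2,b) p)"
  by (auto simp: st2_def psiHH_def kd_def bas_def fun_eq_iff)

lemma st3_0: "0 < n \<Longrightarrow> st3 q n (h1,i,0,b) = (\<lambda>p. (if h1+i<n then 1 else 0) * bas (h1+i,0,0,b) p)"
  by (auto simp: st3_def mulH_def hvec_def dltH_def kd_def bas_def fun_eq_iff qb00)

lemma st3_1: "1 < n \<Longrightarrow> q^2 \<noteq> 1 \<Longrightarrow> st3 q n (h1,i,Suc 0,b) =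
   (\<lambda>p. (if h1+i<n then 1 else 0) * (bas (h1+i,0,Suc 0,b) p + bas (h1+i,Suc 0,0,b) p))"
  by (auto simp: st3_def mulH_def hvec_def dltH_def kd_def bas_def fun_eq_iff qb10 qb11)

lemma st4_b: "st4 q (c1,c2,c3,b) = (\<lambda>p. q powi (2*(-int c3)*int b) * bas (c1,c2,b,c3) p)"
  by (auto simp: st4_def psiHA_def kd_def bas_def fun_eq_iff)

lemma st6_b: "st6 q (e1,b,e3) = (\<lambda>p. q powi (2*int b*(-int e3)) * bas (e1,e3,b) p)"
  by (auto simp: st6_def psiAH_def kd_def bas_def fun_eq_iff)

lemma st7_b: "st7 n (f1,f2,b) = (\<lambda>p. (if f1+f2<n then 1 else 0) * bas (f1+f2,b) p)"
  by (auto simp: st7_def mulH_def hvec_def kd_def bas_def fun_eq_iff)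

lemma actA0: "actA q \<gamma> (0,b) = bas b" by (simp add: actA_def)
lemma ch02: "(0::nat) choose 2 = 0" by (simp add: numeral_2_eq_2)
lemma ch12: "Suc 0 choose 2 = 0" by (simp add: numeral_2_eq_2)
lemma actA1: "actA q \<gamma> (Suc 0,b) = xu q \<gamma> b" by (simp add: actA_def lin_app_bas)
lemma xu0: "xu q \<gamma> 0 = (\<lambda>k. 0)" by simp
lemma xu1: "xu q \<gamma> (Suc 0) = (\<lambda>k. \<gamma> * bas 0 k)" by (auto simp: kd_def bas_def fun_eq_iff split: nat.split)

lemma st5_00: "0 < n \<Longrightarrow> st5 q n \<gamma> (d1,0,b,0) = bas (d1,b,0)"
  by (auto simp: st5_def actA0 antipH_def ch02 ch12 kd_def bas_def fun_eq_iff)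
lemma st5_01: "1 < n \<Longrightarrow> st5 q n \<gamma> (d1,0,b,Suc 0) = (\<lambda>p. (-1) * bas (d1,b,Suc 0) p)"
  by (auto simp: st5_def actA0 antipH_def ch02 ch12 kd_def bas_def fun_eq_iff)
lemma st5_10: "st5 q n \<gamma> (d1,Suc 0,0,d3) = (\<lambda>p. 0)"
  by (auto simp: st5_def actA1 fun_eq_iff)
lemma st5_110: "0 < n \<Longrightarrow> st5 q n \<gamma> (d1,Suc 0,Suc 0,0) = (\<lambda>p. \<gamma> * bas (d1,0,0) p)"
  by (auto simp: st5_def actA1 xu1 antipH_def ch02 ch12 kd_def bas_def fun_eq_iff split: nat.split)

lemma aRY: assumes "2 < n" "q^2 \<noteq> 1"
  shows "aR q n \<gamma> 1 (bas (1,0)) = smul (1 - q ^ 2) (powR q n (bas (1,0)) 2)"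
proof -
  have "aR q n \<gamma> 1 (bas (1,0)) = (\<lambda>z. bas (2, 0) z - q^2 * bas (2, 0) z)"
    using assms unfolding aR_def
    apply (simp add: hvec_bas tvec_bas lin_app_bas st1_1 lin_app_add lin_app_diff lin_app_neg lin_app_scal st2_b st3_0 st3_1 st4_b
       st5_00 st5_01 st5_10 st5_110 st6_b st7_b)
    by (simp add: numeral_2_eq_2)
  moreover have "powR q n (bas (1,0)) 2 = bas (2,0)" using assms by (intro powR_Y) auto
  ultimately show ?thesis by (simp add: smul_def fun_eq_iff algebra_simps)
qed

lemma aRU: assumes "2 < n" "q^2 \<noteq> 1" "q \<noteq> 0"
  shows "aR q n \<gamma> 1 (bas (0,1)) = (\<lambda>p. (1 - q powi (-4)) * prodR q n (bas (1,0)) (bas (0,1)) p + \<gamma> * bas (0,0) p)"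
proof -
  have "aR q n \<gamma> 1 (bas (0,1)) = (\<lambda>z. \<gamma> * bas (0, 0) z -
             q powi - 2 * (q powi - 2 * bas (Suc 0, Suc 0) z) + bas (Suc 0, Suc 0) z)"
    using assms unfolding aR_def
    apply (simp add: hvec_bas tvec_bas lin_app_bas st1_1 lin_app_add lin_app_diff lin_app_neg lin_app_scal st2_b st3_0 st3_1 st4_b
       st5_00 st5_01 st5_10 st5_110 st6_b st7_b)
    done
  moreover have "q powi (-4) = q powi -2 * q powi -2"
    using power_int_add[of q "-2" "-2"] assms by simp
  ultimately show ?thesis using assms by (simp add: prodR_bas fun_eq_iff algebra_simps)
qed


lemma gRY: "gR q (bas (1,0)) = smul (q powi (-2)) (bas (1,0))"
  by (auto simp: gR_def smul_def bas_def fun_eq_iff)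
lemma gRU: "gR q (bas (0,1)) = smul (q^2) (bas (0,1))"
  by (auto simp: gR_def smul_def bas_def fun_eq_iff)
lemma deltaRY: "1 < n \<Longrightarrow> q^2 \<noteq> 1 \<Longrightarrow> deltaR q n (bas (1,0)) = (\<lambda>p. bas (0,1,0) p + bas (1,0,0) p)"
  unfolding deltaR_def lin_app_bas by (auto simp: dltH_def kd_def bas_def fun_eq_iff qb10 qb11)
lemma deltaRU: "0 < n \<Longrightarrow> deltaR q n (bas (0,1)) = bas (0,0,1)"
  unfolding deltaR_def lin_app_bas by (auto simp: dltH_def kd_def bas_def fun_eq_iff qb00)

lemma zpow_central: assumes c: "\<forall>x. z * x = x * (z::'b::ring_1)" shows "z ^ k * x = x * z ^ k"
proof (induction k)
  case (Suc k)
  have "z ^ Suc k * x = z * (z^k * x)" by (simp only: power_Suc mult.assoc)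
  also have "\<dots> = z * (x * z^k)" by (simp only: Suc)
  also have "\<dots> = (z * x) * z^k" by (simp only: mult.assoc)
  also have "\<dots> = (x * z) * z^k" using c by simp
  also have "\<dots> = x * z ^ Suc k" by (simp only: power_Suc mult.assoc)
  finally show ?case .
qed simp

lemma comm1: assumes c: "\<forall>x. z * x = x * (z::'b::ring_1)" and r: "Ub * Yb = z * Yb * Ub"
  shows "Ub * Yb ^ j = z ^ j * Yb ^ j * Ub"
proof (induction j)
  case (Suc j)
  have "Ub * Yb ^ Suc j = (Ub * Yb ^ j) * Yb" by (simp only: power_Suc2 mult.assoc)
  also have "\<dots> = z^j * Yb^j * (Ub * Yb)" using Suc by (simp add: mult.assoc)
  also have "\<dots> = z^j * (Yb^j * z) * Yb * Ub" using r by (simp only: mult.assoc)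
  also have "\<dots> = z^j * z * (Yb^j * Yb) * Ub" using c by (metis mult.assoc)
  also have "\<dots> = z ^ Suc j * Yb ^ Suc j * Ub" by (simp only: power_Suc2)
  finally show ?case .
qed simp

lemma comm2: assumes c: "\<forall>x. z * x = x * (z::'b::ring_1)" and r: "Ub * Yb = z * Yb * Ub"
  shows "Ub ^ b * Yb ^ j = z ^ (b * j) * Yb ^ j * Ub ^ b"
proof (induction b)
  case (Suc b)
  have "Ub ^ Suc b * Yb ^ j = Ub * (Ub^b * Yb ^ j)" by (simp add: mult.assoc)
  also have "\<dots> = (Ub * z ^ (b * j)) * Yb ^ j * Ub ^ b" using Suc by (simp add: mult.assoc)
  also have "\<dots> = z ^ (b * j) * (Ub * Yb ^ j) * Ub ^ b" using zpow_central[OF c, of "b*j" Ub] by (metis mult.assoc)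
  also have "\<dots> = z ^ (b * j) * z ^ j * Yb ^ j * (Ub * Ub ^ b)" using comm1[OF c r, of j] by (simp add: mult.assoc)
  also have "\<dots> = z ^ (Suc b * j) * Yb ^ j * Ub ^ Suc b"
  proof -
    have "z ^ (Suc b * j) = z ^ (b * j) * z ^ j" by (metis add.commute mult_Suc power_add)
    then show ?thesis by (simp only: power_Suc)
  qed
  finally show ?case .
qed simp

lemma ch_0: "central_hom \<phi> \<Longrightarrow> \<phi> 0 = 0"
  unfolding central_hom_def by (metis add_0 add_cancel_right_right)
lemma ch_add: "central_hom \<phi> \<Longrightarrow> \<phi> (a + c) = \<phi> a + \<phi> c" unfolding central_hom_def by blast
lemma ch_mult: "central_hom \<phi> \<Longrightarrow> \<phi> (a * c) = \<phi> a * \<phi> c" unfolding central_hom_def by blast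
lemma ch_1: "central_hom \<phi> \<Longrightarrow> \<phi> 1 = 1" unfolding central_hom_def by blast
lemma ch_comm: "central_hom \<phi> \<Longrightarrow> \<phi> a * x = x * \<phi> a" unfolding central_hom_def by blast
lemma ch_pow: "central_hom \<phi> \<Longrightarrow> \<phi> (a ^ k) = \<phi> a ^ k"
  by (induction k) (auto simp: ch_1 ch_mult)
lemma ch_sum: "central_hom \<phi> \<Longrightarrow> \<phi> (\<Sum>k\<in>K. f k) = (\<Sum>k\<in>K. \<phi> (f k))"
  by (induction K rule: infinite_finite_induct) (auto simp: ch_0 ch_add)

definition Mon :: "'b::ring_1 \<Rightarrow> 'b \<Rightarrow> nat \<times> nat \<Rightarrow> 'b" where
  "Mon Yb Ub p = Yb ^ fst p * Ub ^ snd p"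

lemma key: assumes ch: "central_hom \<phi>" and yn: "Yb ^ n = 0" and r: "Ub * Yb = \<phi> (q powi (-2)) * Yb * Ub"
  shows "\<phi> (q powi (2*int b*(-int j)) * (if i+j<n then 1 else 0)) * Mon Yb Ub (i+j, b+d)
     = Mon Yb Ub (i,b) * Mon Yb Ub (j,d)"
proof -
  let ?z = "\<phi> (q powi (-2))"
  have c: "\<forall>x. ?z * x = x * ?z" using ch_comm[OF ch] by blast
  have qp: "q powi (2*int b*(-int j)) = (q powi (-2)) ^ (b*j)"
  proof -
    have "q powi (2*int b*(-int j)) = q powi (-2 * int (b*j))" by (simp add: algebra_simps)
    also have "\<dots> = (q powi (-2)) powi (int (b*j))" by (rule power_int_mult)
    also have "\<dots> = (q powi (-2)) ^ (b*j)" by (rule power_int_of_nat)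
    finally show ?thesis .
  qed
  have "Mon Yb Ub (i,b) * Mon Yb Ub (j,d) = Yb^i * (Ub^b * Yb^j) * Ub^d"
    by (simp add: Mon_def mult.assoc)
  also have "\<dots> = Yb^i * (?z^(b*j) * Yb^j * Ub^b) * Ub^d" using comm2[OF c r] by simp
  also have "\<dots> = (Yb^i * ?z^(b*j)) * Yb^j * Ub^b * Ub^d" by (simp only: mult.assoc)
  also have "\<dots> = (?z^(b*j) * Yb^i) * Yb^j * Ub^b * Ub^d"
    by (simp only: zpow_central[OF c, of "b*j" "Yb^i"])
  also have "\<dots> = ?z^(b*j) * Yb^(i+j) * Ub^(b+d)" by (simp only: mult.assoc power_add)
  finally have m: "Mon Yb Ub (i,b) * Mon Yb Ub (j,d) = ?z^(b*j) * Yb^(i+j) * Ub^(b+d)" .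
  show ?thesis
  proof (cases "i+j<n")
    case True
    have e: "q powi (2*int b*(-int j)) * (if i+j<n then 1 else 0) = (q powi (-2)) ^ (b*j)"
      using True qp by simp
    show ?thesis unfolding e ch_pow[OF ch] using m by (simp add: Mon_def mult.assoc)
  next
    case False
    then have "Yb^(i+j) = 0" using yn by (metis le_add_diff_inverse linorder_not_less mult_zero_left power_add)
    then show ?thesis using m False by (simp add: ch_0[OF ch])
  qed
qed

lemma comb_supp: "{p. (\<Sum>k\<in>K. c k * bas (e k) p) \<noteq> (0::'k::field)} \<subseteq> e ` K"
proof
  fix p assume "p \<in> {p. (\<Sum>k\<in>K. c k * bas (e k) p) \<noteq> (0::'k)}"
  then obtain k where "k \<in> K" "c k * bas (e k) p \<noteq> (0::'k)"
    by (metis (mono_tags, lifting) mem_Collect_eq sum.neutral)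
  then show "p \<in> e ` K" by (auto simp: bas_def split: if_splits)
qed

lemma lin_app_comb: assumes "finite K"
  shows "lin_app L (\<lambda>p. \<Sum>k\<in>K. c k * bas (e k) p) = (\<lambda>z. \<Sum>k\<in>K. c k * L (e k) z)"
proof
  fix z
  have "lin_app L (\<lambda>p. \<Sum>k\<in>K. c k * bas (e k) p) z
      = (\<Sum>b\<in>e`K. (\<Sum>k\<in>K. c k * bas (e k) b) * L b z)"
    by (rule lin_app_sup) (use assms comb_supp[where K=K and c=c and e=e] in auto)
  also have "\<dots> = (\<Sum>b\<in>e`K. \<Sum>k\<in>K. c k * bas (e k) b * L b z)" by (simp add: sum_distrib_right)
  also have "\<dots> = (\<Sum>k\<in>K. \<Sum>b\<in>e`K. c k * bas (e k) b * L b z)" by (rule sum.swap)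
  also have "\<dots> = (\<Sum>k\<in>K. c k * L (e k) z)"
  proof (rule sum.cong)
    fix k assume k: "k \<in> K"
    have "(\<Sum>b\<in>e`K. c k * bas (e k) b * L b z) = (\<Sum>b\<in>e`K. if b = e k then c k * L b z else 0)"
      by (rule sum.cong) (auto simp: bas_def)
    also have "\<dots> = c k * L (e k) z" using k assms by (simp add: sum.delta)
    finally show "(\<Sum>b\<in>e`K. c k * bas (e k) b * L b z) = c k * L (e k) z" .
  qed simp
  finally show "lin_app L (\<lambda>p. \<Sum>k\<in>K. c k * bas (e k) p) z = (\<Sum>k\<in>K. c k * L (e k) z)" .
qed

definition Fm :: "('k::field \<Rightarrow> 'b::ring_1) \<Rightarrow> 'b \<Rightarrow> 'b \<Rightarrow> (nat \<times> nat \<Rightarrow> 'k) \<Rightarrow> 'b" where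
  "Fm \<phi> Yb Ub v = (\<Sum>p\<in>{p. v p \<noteq> 0}. \<phi> (v p) * Mon Yb Ub p)"

lemma Fm_sup: assumes "central_hom \<phi>" "finite S" "{p. v p \<noteq> 0} \<subseteq> S"
  shows "Fm \<phi> Yb Ub v = (\<Sum>p\<in>S. \<phi> (v p) * Mon Yb Ub p)"
  unfolding Fm_def by (rule sum.mono_neutral_left) (use assms in \<open>auto simp: ch_0\<close>)

lemma Fm_comb: assumes ch: "central_hom \<phi>" and K: "finite K"
  shows "Fm \<phi> Yb Ub (\<lambda>p. \<Sum>k\<in>K. c k * bas (e k) p) = (\<Sum>k\<in>K. \<phi> (c k) * Mon Yb Ub (e k))"
proof -
  have "Fm \<phi> Yb Ub (\<lambda>p. \<Sum>k\<in>K. c k * bas (e k) p)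
      = (\<Sum>p\<in>e`K. \<phi> (\<Sum>k\<in>K. c k * bas (e k) p) * Mon Yb Ub p)"
    by (rule Fm_sup) (use ch K comb_supp[where K=K and c=c and e=e] in auto)
  also have "\<dots> = (\<Sum>p\<in>e`K. \<Sum>k\<in>K. \<phi> (c k * bas (e k) p) * Mon Yb Ub p)"
    by (simp add: ch_sum[OF ch] sum_distrib_right)
  also have "\<dots> = (\<Sum>k\<in>K. \<Sum>p\<in>e`K. \<phi> (c k * bas (e k) p) * Mon Yb Ub p)" by (rule sum.swap)
  also have "\<dots> = (\<Sum>k\<in>K. \<phi> (c k) * Mon Yb Ub (e k))"
  proof (rule sum.cong)
    fix k assume k: "k \<in> K"
    have "(\<Sum>p\<in>e`K. \<phi> (c k * bas (e k) p) * Mon Yb Ub p) = (\<Sum>p\<in>e`K. if p = e k then \<phi> (c k) * Mon Yb Ub p else 0)"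
      by (rule sum.cong) (auto simp: bas_def ch_0[OF ch])
    also have "\<dots> = \<phi> (c k) * Mon Yb Ub (e k)" using k K by (simp add: sum.delta)
    finally show "(\<Sum>p\<in>e`K. \<phi> (c k * bas (e k) p) * Mon Yb Ub p) = \<phi> (c k) * Mon Yb Ub (e k)" .
  qed simp
  finally show ?thesis .
qed

lemma rep: assumes "fs v" shows "v = (\<lambda>p. \<Sum>a\<in>{a. v a \<noteq> 0}. v a * bas a p)"
proof
  fix p
  have "(\<Sum>a\<in>{a. v a \<noteq> 0}. v a * bas a p) = (\<Sum>a\<in>{a. v a \<noteq> 0}. if p = a then v a else 0)"
    by (rule sum.cong) (auto simp: bas_def)
  also have "\<dots> = v p" using assms by (simp add: sum.delta' fs_def)
  finally show "v p = (\<Sum>a\<in>{a. v a \<noteq> 0}. v a * bas a p)" by simp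
qed

lemma tvec_rep: assumes "fs v" "fs w"
  shows "tvec v w = (\<lambda>p. \<Sum>x\<in>{a. v a \<noteq> 0} \<times> {b. w b \<noteq> 0}. (v (fst x) * w (snd x)) * bas x p)"
proof -
  have pt: "tvec v w (a,b) = (\<Sum>x\<in>{a. v a \<noteq> 0} \<times> {b. w b \<noteq> 0}. (v (fst x) * w (snd x)) * bas x (a,b))" for a b
  proof -
    have "(\<Sum>x\<in>{a. v a \<noteq> 0} \<times> {b. w b \<noteq> 0}. (v (fst x) * w (snd x)) * bas x (a,b))
       = (\<Sum>x\<in>{a. v a \<noteq> 0} \<times> {b. w b \<noteq> 0}. if (a,b) = x then v (fst x) * w (snd x) else 0)"
      by (rule sum.cong) (auto simp: bas_def)
    also have "\<dots> = v a * w b" using assms by (simp add: sum.delta' fs_def)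
    finally show ?thesis by (simp add: tvec_def)
  qed
  show ?thesis by (simp only: fun_eq_iff split_paired_All pt) simp
qed

definition PCa :: "'k::field \<Rightarrow> (nat \<times> nat) \<times> (nat \<times> nat) \<Rightarrow> 'k" where
  "PCa q x = (case x of ((i,b),(j,d)) \<Rightarrow> q powi (2*int b*(-int j)))"
definition CUT :: "nat \<Rightarrow> (nat \<times> nat) \<times> (nat \<times> nat) \<Rightarrow> 'k::field" where
  "CUT n x = (case x of ((i,b),(j,d)) \<Rightarrow> if i+j<n then 1 else 0)"
definition E1 :: "(nat \<times> nat) \<times> (nat \<times> nat) \<Rightarrow> nat \<times> nat \<times> nat \<times> nat" where
  "E1 x = (case x of ((i,b),(j,d)) \<Rightarrow> (i,j,b,d))"
definition PE :: "(nat \<times> nat) \<times> (nat \<times> nat) \<Rightarrow> nat \<times> nat" where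
  "PE x = (case x of ((i,b),(j,d)) \<Rightarrow> (i+j,b+d))"

lemma mRa_gen: "mRa q x = (\<lambda>z. PCa q x * bas (E1 x) z)"
  by (cases x) (auto simp: mRa_bas PCa_def E1_def)
lemma mRb_gen: "mRb n (E1 x) = (\<lambda>z. CUT n x * bas (PE x) z)"
  by (cases x) (auto simp: mRb_bas CUT_def E1_def PE_def)

lemma prodR_expand: assumes "fs v" "fs w"
  shows "prodR q n v w = (\<lambda>z. \<Sum>x\<in>{a. v a \<noteq> 0} \<times> {b. w b \<noteq> 0}.
            (v (fst x) * w (snd x) * PCa q x * CUT n x) * bas (PE x) z)"
proof -
  let ?S = "{a. v a \<noteq> 0} \<times> {b. w b \<noteq> 0}"
  have fin: "finite ?S" using assms by (auto simp: fs_def)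
  have "lin_app (mRa q) (tvec v w) = (\<lambda>z. \<Sum>x\<in>?S. (v (fst x) * w (snd x)) * mRa q x z)"
    unfolding tvec_rep[OF assms] by (rule lin_app_comb[OF fin])
  also have "\<dots> = (\<lambda>z. \<Sum>x\<in>?S. (v (fst x) * w (snd x) * PCa q x) * bas (E1 x) z)"
    by (simp add: mRa_gen mult.assoc)
  finally have 1: "lin_app (mRa q) (tvec v w) = (\<lambda>z. \<Sum>x\<in>?S. (v (fst x) * w (snd x) * PCa q x) * bas (E1 x) z)" .
  have "prodR q n v w = (\<lambda>z. \<Sum>x\<in>?S. (v (fst x) * w (snd x) * PCa q x) * mRb n (E1 x) z)"
    unfolding prodR_def 1 by (rule lin_app_comb[OF fin])
  also have "\<dots> = (\<lambda>z. \<Sum>x\<in>?S. (v (fst x) * w (snd x) * PCa q x * CUT n x) * bas (PE x) z)"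
    by (simp add: mRb_gen mult.assoc)
  finally show ?thesis .
qed

lemma Fm_mult: assumes ch: "central_hom \<phi>" and yn: "Yb ^ n = 0"
  and r: "Ub * Yb = \<phi> (q powi (-2)) * Yb * Ub" and fv: "fs v" and fw: "fs w"
  shows "Fm \<phi> Yb Ub (prodR q n v w) = Fm \<phi> Yb Ub v * Fm \<phi> Yb Ub w"
proof -
  let ?S = "{a. v a \<noteq> 0} \<times> {b. w b \<noteq> 0}"
  have fin: "finite ?S" using fv fw by (auto simp: fs_def)
  have "Fm \<phi> Yb Ub (prodR q n v w)
     = (\<Sum>x\<in>?S. \<phi> (v (fst x) * w (snd x) * PCa q x * CUT n x) * Mon Yb Ub (PE x))"
    unfolding prodR_expand[OF fv fw] by (rule Fm_comb[OF ch fin])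
  also have "\<dots> = (\<Sum>x\<in>?S. (\<phi> (v (fst x)) * Mon Yb Ub (fst x)) * (\<phi> (w (snd x)) * Mon Yb Ub (snd x)))"
  proof (rule sum.cong[OF refl])
    fix x :: "(nat \<times> nat) \<times> (nat \<times> nat)"
    obtain i b j d where x: "x = ((i,b),(j,d))" by (metis prod.collapse)
    have e1: "PCa q x * CUT n x = q powi (2*int b*(-int j)) * (if i+j<n then 1 else 0)"
      by (simp add: x PCa_def CUT_def)
    have e2: "PE x = (i+j, b+d)" by (simp add: x PE_def)
    have k: "\<phi> (PCa q x * CUT n x) * Mon Yb Ub (PE x) = Mon Yb Ub (fst x) * Mon Yb Ub (snd x)"
      unfolding e1 e2 using key[OF ch yn r, of b j i d] by (simp add: x)
    have "\<phi> (v (fst x) * w (snd x) * PCa q x * CUT n x) = \<phi> (v (fst x)) * \<phi> (w (snd x)) * \<phi> (PCa q x * CUT n x)"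
      by (simp add: ch_mult[OF ch] mult.assoc)
    then have "\<phi> (v (fst x) * w (snd x) * PCa q x * CUT n x) * Mon Yb Ub (PE x)
        = \<phi> (v (fst x)) * (\<phi> (w (snd x)) * Mon Yb Ub (fst x)) * Mon Yb Ub (snd x)"
      using k by (simp add: mult.assoc)
    also have "\<dots> = \<phi> (v (fst x)) * (Mon Yb Ub (fst x) * \<phi> (w (snd x))) * Mon Yb Ub (snd x)"
      by (simp only: ch_comm[OF ch])
    finally show "\<phi> (v (fst x) * w (snd x) * PCa q x * CUT n x) * Mon Yb Ub (PE x)
       = (\<phi> (v (fst x)) * Mon Yb Ub (fst x)) * (\<phi> (w (snd x)) * Mon Yb Ub (snd x))"
      by (simp add: mult.assoc)
  qed
  also have "\<dots> = (\<Sum>a\<in>{a. v a \<noteq> 0}. \<phi> (v a) * Mon Yb Ub a) * (\<Sum>b\<in>{b. w b \<noteq> 0}. \<phi> (w b) * Mon Yb Ub b)"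
    by (simp add: sum.cartesian_product' sum_product)
  finally show ?thesis by (simp add: Fm_def)
qed

lemma Fm_add: assumes ch: "central_hom \<phi>" and "fs v" "fs w"
  shows "Fm \<phi> Yb Ub (\<lambda>p. v p + w p) = Fm \<phi> Yb Ub v + Fm \<phi> Yb Ub w"
proof -
  let ?S = "{p. v p \<noteq> 0} \<union> {p. w p \<noteq> 0}"
  have f: "finite ?S" using assms by (auto simp: fs_def)
  have 1: "Fm \<phi> Yb Ub (\<lambda>p. v p + w p) = (\<Sum>p\<in>?S. \<phi> (v p + w p) * Mon Yb Ub p)"
    by (rule Fm_sup[OF ch f]) auto
  have 2: "Fm \<phi> Yb Ub v = (\<Sum>p\<in>?S. \<phi> (v p) * Mon Yb Ub p)"
    by (rule Fm_sup[OF ch f]) auto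
  have 3: "Fm \<phi> Yb Ub w = (\<Sum>p\<in>?S. \<phi> (w p) * Mon Yb Ub p)"
    by (rule Fm_sup[OF ch f]) auto
  show ?thesis unfolding 1 2 3 by (simp only: ch_add[OF ch] distrib_right sum.distrib)
qed

lemma Fm_smul: assumes ch: "central_hom \<phi>" and "fs v"
  shows "Fm \<phi> Yb Ub (smul c v) = \<phi> c * Fm \<phi> Yb Ub v"
proof -
  let ?S = "{p. v p \<noteq> 0}"
  have f: "finite ?S" using assms by (auto simp: fs_def)
  have 1: "Fm \<phi> Yb Ub (smul c v) = (\<Sum>p\<in>?S. \<phi> (smul c v p) * Mon Yb Ub p)"
    by (rule Fm_sup[OF ch f]) (auto simp: smul_def)
  have 2: "Fm \<phi> Yb Ub v = (\<Sum>p\<in>?S. \<phi> (v p) * Mon Yb Ub p)"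
    by (rule Fm_sup[OF ch f]) auto
  show ?thesis unfolding 1 2 sum_distrib_left
    by (rule sum.cong[OF refl]) (simp only: smul_def ch_mult[OF ch] mult.assoc)
qed

lemma Fm_bas: assumes ch: "central_hom \<phi>" shows "Fm \<phi> Yb Ub (bas a) = Mon Yb Ub a"
proof -
  have "Fm \<phi> Yb Ub (bas a) = (\<Sum>p\<in>{a}. \<phi> (bas a p) * Mon Yb Ub p)"
    by (rule Fm_sup[OF ch]) (auto simp: bas_def)
  then show ?thesis by (simp add: bas_def ch_1[OF ch])
qed

lemma Rcar_fs: "v \<in> Rcar n \<Longrightarrow> fs v" by (simp add: Rcar_def fs_def)

lemma Rcar_comb: assumes "finite K" "\<forall>k\<in>K. fst (e k) < n"
  shows "(\<lambda>p. \<Sum>k\<in>K. c k * bas (e k) p) \<in> Rcar n"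
proof -
  have sub: "{p. (\<Sum>k\<in>K. c k * bas (e k) p) \<noteq> 0} \<subseteq> e ` K" by (fact comb_supp[where K=K and c=c and e=e])
  have f: "finite {p. (\<Sum>k\<in>K. c k * bas (e k) p) \<noteq> 0}"
    using assms(1) by (rule finite_subset[OF sub finite_imageI])
  have hb: "i < n" if "(\<Sum>k\<in>K. c k * bas (e k) (i,b)) \<noteq> 0" for i b
  proof -
    have "(i,b) \<in> e ` K" using subsetD[OF sub, of "(i,b)"] that by simp
    then obtain k where k: "k \<in> K" "e k = (i,b)" by (metis imageE)
    have "fst (e k) < n" using assms(2) k(1) by (rule bspec)
    then show ?thesis using k(2) by simp
  qed
  show ?thesis unfolding Rcar_def mem_Collect_eq
    apply (intro conjI allI impI)
     apply (rule f)
    apply (erule hb)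
    done
qed

lemma Rcar_bas: assumes "i < n" shows "bas (i,b) \<in> (Rcar n :: (nat \<times> nat \<Rightarrow> 'k::field) set)"
proof -
  have "{p. (bas (i,b) p :: 'k::field) \<noteq> 0} = {(i,b)}" by (auto simp: bas_def)
  moreover have "\<forall>i' b'. (bas (i,b) (i',b') :: 'k) \<noteq> 0 \<longrightarrow> i' < n" using assms by (simp add: bas_def)
  ultimately show ?thesis unfolding Rcar_def by simp
qed

lemma Rcar_bas': "fst a < n \<Longrightarrow> bas a \<in> Rcar n"
  by (cases a) (simp add: Rcar_bas)

lemma uniq: fixes q :: "'k::field" assumes h: "R_alg_hom q n \<phi> f" and fY: "f (bas (1,0)) = Yb" and fU: "f (bas (0,1)) = Ub"
  and n: "1 < n"
  shows "\<forall>v\<in>Rcar n. f v = Fm \<phi> Yb Ub v"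
proof -
  have add: "\<And>v w. v \<in> Rcar n \<Longrightarrow> w \<in> Rcar n \<Longrightarrow> f (\<lambda>p. v p + w p) = f v + f w"
   and sm: "\<And>c v. v \<in> Rcar n \<Longrightarrow> f (smul c v) = \<phi> c * f v"
   and mu: "\<And>v w. v \<in> Rcar n \<Longrightarrow> w \<in> Rcar n \<Longrightarrow> f (prodR q n v w) = f v * f w"
   and one: "f (bas (0,0)) = 1" using h unfolding R_alg_hom_def by blast+
  have z0: "(\<lambda>p. 0) \<in> Rcar n" by (simp add: Rcar_def)
  have fz: "f (\<lambda>p. 0) = 0" using add[OF z0 z0] by simp
  have fy: "f (bas (i,0)) = Yb ^ i" if "i < n" for i
    using that
  proof (induction i)
    case 0 then show ?case using one by simp
  next
    case (Suc i)
    have "bas (Suc i, 0) = prodR q n (bas (1,0)) (bas (i,0))"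
      using Suc.prems by (simp add: prodR_bas)
    then show ?case using mu[OF Rcar_bas[OF n] Rcar_bas[of i n 0]] Suc fY by simp
  qed
  have fu: "f (bas (0,b)) = Ub ^ b" for b
  proof (induction b)
    case 0 then show ?case using one by simp
  next
    case (Suc b)
    have "bas (0, Suc b) = prodR q n (bas (0,1)) (bas (0,b))"
      using n by (simp add: prodR_bas)
    then show ?case using mu[OF Rcar_bas[of 0 n 1] Rcar_bas[of 0 n b]] Suc fU n by simp
  qed
  have fb: "f (bas a) = Mon Yb Ub a" if "fst a < n" for a
  proof -
    obtain i b where a: "a = (i,b)" by (cases a)
    have "bas (i,b) = prodR q n (bas (i,0)) (bas (0,b))"
      using that a by (simp add: prodR_bas)
    then show ?thesis using mu[OF Rcar_bas[of i n 0] Rcar_bas[of 0 n b]] fy[of i] fu[of b] that a n by (simp add: Mon_def)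
  qed
  have comb: "f (\<lambda>p. \<Sum>k\<in>K. c k * bas (e k) p) = (\<Sum>k\<in>K. \<phi> (c k) * Mon Yb Ub (e k))"
    if "finite K" "\<forall>k\<in>K. fst (e k) < n" for K c e
    using that
  proof (induction K rule: finite_induct)
    case empty then show ?case using fz by simp
  next
    case (insert x K)
    have eq: "(\<lambda>p. \<Sum>k\<in>insert x K. c k * bas (e k) p) = (\<lambda>p. smul (c x) (bas (e x)) p + (\<Sum>k\<in>K. c k * bas (e k) p))"
      using insert by (simp add: smul_def)
    have r1: "smul (c x) (bas (e x)) \<in> Rcar n"
      using insert.prems by (auto simp: Rcar_def fs_def bas_def smul_def) (metis fst_conv)
    have r2: "(\<lambda>p. \<Sum>k\<in>K. c k * bas (e k) p) \<in> Rcar n"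
      using insert by (intro Rcar_comb) auto
    have r3: "bas (e x) \<in> Rcar n" using insert.prems Rcar_bas'[of "e x" n] by simp
    have "f (\<lambda>p. \<Sum>k\<in>insert x K. c k * bas (e k) p) = f (smul (c x) (bas (e x))) + f (\<lambda>p. \<Sum>k\<in>K. c k * bas (e k) p)"
      unfolding eq by (rule add[OF r1 r2])
    also have "\<dots> = \<phi> (c x) * Mon Yb Ub (e x) + (\<Sum>k\<in>K. \<phi> (c k) * Mon Yb Ub (e k))"
      using sm[OF r3, of "c x"] fb[of "e x"] insert by simp
    also have "\<dots> = (\<Sum>k\<in>insert x K. \<phi> (c k) * Mon Yb Ub (e k))" using insert by simp
    finally show ?case .
  qed
  show ?thesis
  proof
    fix v :: "nat \<times> nat \<Rightarrow> 'k" assume v: "v \<in> Rcar n"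
    have vr: "v = (\<lambda>p. \<Sum>a\<in>{a. v a \<noteq> 0}. v a * bas a p)" by (rule rep[OF Rcar_fs[OF v]])
    have "f v = f (\<lambda>p. \<Sum>a\<in>{a. v a \<noteq> 0}. v a * bas a p)" using vr by (rule arg_cong)
    also have "\<dots> = (\<Sum>a\<in>{a. v a \<noteq> 0}. \<phi> (v a) * Mon Yb Ub a)"
    proof (rule comb[of "{a. v a \<noteq> 0}" "\<lambda>a. a" v])
      show "finite {a. v a \<noteq> 0}" using v by (simp add: Rcar_def)
      show "\<forall>k\<in>{a. v a \<noteq> 0}. fst k < n" using v unfolding Rcar_def by auto
    qed
    finally show "f v = Fm \<phi> Yb Ub v" by (simp add: Fm_def)
  qed
qed

theorem lemma6p3:
  fixes q \<gamma> :: "'k::field" and n :: nat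
  assumes "n \<ge> 3"
    and "(q ^ 2) ^ n = 1"
    and "\<forall>k. 0 < k \<and> k < n \<longrightarrow> (q ^ 2) ^ k \<noteq> 1"
  defines "Y \<equiv> (bas (1, 0) :: nat \<times> nat \<Rightarrow> 'k)"
    and "U \<equiv> (bas (0, 1) :: nat \<times> nat \<Rightarrow> 'k)"
    and "I \<equiv> (bas (0, 0) :: nat \<times> nat \<Rightarrow> 'k)"
  shows
    "powR q n Y n = (\<lambda>_. 0)
   \<and> prodR q n U Y = smul (q powi (-2)) (prodR q n Y U)
   \<and> (\<forall>(\<phi> :: 'k \<Rightarrow> 'b::ring_1) Yb Ub.
        central_hom \<phi> \<and> Yb ^ n = 0 \<and> Ub * Yb = \<phi> (q powi (-2)) * Yb * Ub \<longrightarrow>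
        (\<exists>f. R_alg_hom q n \<phi> f \<and> f Y = Yb \<and> f U = Ub
           \<and> (\<forall>f'. R_alg_hom q n \<phi> f' \<and> f' Y = Yb \<and> f' U = Ub \<longrightarrow> (\<forall>v\<in>Rcar n. f' v = f v))))
   \<and> gR q Y = smul (q powi (-2)) Y
   \<and> gR q U = smul (q ^ 2) U
   \<and> aR q n \<gamma> 1 Y = smul (1 - q ^ 2) (powR q n Y 2)
   \<and> aR q n \<gamma> 1 U = (\<lambda>p. (1 - q powi (-4)) * prodR q n Y U p + \<gamma> * I p)
   \<and> deltaR q n Y = (\<lambda>p. bas (0, 1, 0) p + bas (1, 0, 0) p)
   \<and> deltaR q n U = bas (0, 0, 1)"
proof -
  have n2: "2 < n" and n1: "1 < n" and n0: "0 < n" using assms(1) by auto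
  have q1: "q^2 \<noteq> 1" using assms(3)[rule_format, of 1] n1 by simp
  have q0: "q \<noteq> 0" using assms(2) n0 by (cases "q = 0") (auto simp: power_0_left)
  have c1: "powR q n Y n = (\<lambda>_. 0)" unfolding Y_def using powR_Y_n[OF n0] .
  have c2: "prodR q n U Y = smul (q powi (-2)) (prodR q n Y U)"
    unfolding Y_def U_def using n1 by (simp add: prodR_bas smul_def fun_eq_iff)
  have c3: "\<forall>(\<phi> :: 'k \<Rightarrow> 'b::ring_1) Yb Ub.
        central_hom \<phi> \<and> Yb ^ n = 0 \<and> Ub * Yb = \<phi> (q powi (-2)) * Yb * Ub \<longrightarrow>
        (\<exists>f. R_alg_hom q n \<phi> f \<and> f Y = Yb \<and> f U = Ub
           \<and> (\<forall>f'. R_alg_hom q n \<phi> f' \<and> f' Y = Yb \<and> f' U = Ub \<longrightarrow> (\<forall>v\<in>Rcar n. f' v = f v)))"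
  proof (intro allI impI)
    fix \<phi> :: "'k \<Rightarrow> 'b::ring_1" and Yb Ub
    assume H: "central_hom \<phi> \<and> Yb ^ n = 0 \<and> Ub * Yb = \<phi> (q powi (-2)) * Yb * Ub"
    then have ch: "central_hom \<phi>" and yn: "Yb ^ n = 0" and r: "Ub * Yb = \<phi> (q powi (-2)) * Yb * Ub" by auto
    have hom: "R_alg_hom q n \<phi> (Fm \<phi> Yb Ub)"
      unfolding R_alg_hom_def
    proof (intro conjI ballI allI)
      fix v w :: "nat \<times> nat \<Rightarrow> 'k" assume v: "v \<in> Rcar n" and w: "w \<in> Rcar n"
      show "Fm \<phi> Yb Ub (\<lambda>p. v p + w p) = Fm \<phi> Yb Ub v + Fm \<phi> Yb Ub w"
        by (rule Fm_add[OF ch Rcar_fs[OF v] Rcar_fs[OF w]])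
    next
      fix v w :: "nat \<times> nat \<Rightarrow> 'k" assume v: "v \<in> Rcar n" and w: "w \<in> Rcar n"
      show "Fm \<phi> Yb Ub (prodR q n v w) = Fm \<phi> Yb Ub v * Fm \<phi> Yb Ub w"
        by (rule Fm_mult[OF ch yn r Rcar_fs[OF v] Rcar_fs[OF w]])
    next
      fix c and v :: "nat \<times> nat \<Rightarrow> 'k" assume v: "v \<in> Rcar n"
      show "Fm \<phi> Yb Ub (smul c v) = \<phi> c * Fm \<phi> Yb Ub v"
        by (rule Fm_smul[OF ch Rcar_fs[OF v]])
    next
      show "Fm \<phi> Yb Ub (bas (0, 0)) = 1" by (simp add: Fm_bas[OF ch] Mon_def)
    qed
    have fY: "Fm \<phi> Yb Ub Y = Yb" unfolding Y_def by (simp add: Fm_bas[OF ch] Mon_def)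
    have fU: "Fm \<phi> Yb Ub U = Ub" unfolding U_def by (simp add: Fm_bas[OF ch] Mon_def)
    show "\<exists>f. R_alg_hom q n \<phi> f \<and> f Y = Yb \<and> f U = Ub
           \<and> (\<forall>f'. R_alg_hom q n \<phi> f' \<and> f' Y = Yb \<and> f' U = Ub \<longrightarrow> (\<forall>v\<in>Rcar n. f' v = f v))"
    proof (intro exI[of _ "Fm \<phi> Yb Ub"] conjI hom fY fU allI impI)
      fix f' assume "R_alg_hom q n \<phi> f' \<and> f' Y = Yb \<and> f' U = Ub"
      then show "\<forall>v\<in>Rcar n. f' v = Fm \<phi> Yb Ub v"
        using uniq[of q n \<phi> f' Yb Ub] n1 unfolding Y_def U_def by blast
    qed
  qed
  have c4: "gR q Y = smul (q powi (-2)) Y" unfolding Y_def by (rule gRY)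
  have c5: "gR q U = smul (q ^ 2) U" unfolding U_def by (rule gRU)
  have c6: "aR q n \<gamma> 1 Y = smul (1 - q ^ 2) (powR q n Y 2)" unfolding Y_def by (rule aRY[OF n2 q1])
  have c7: "aR q n \<gamma> 1 U = (\<lambda>p. (1 - q powi (-4)) * prodR q n Y U p + \<gamma> * I p)"
    unfolding Y_def U_def I_def by (rule aRU[OF n2 q1 q0])
  have c8: "deltaR q n Y = (\<lambda>p. bas (0, 1, 0) p + bas (1, 0, 0) p)" unfolding Y_def by (rule deltaRY[OF n1 q1])
  have c9: "deltaR q n U = bas (0, 0, 1)" unfolding U_def by (rule deltaRU[OF n0])
  show ?thesis using c1 c2 c3 c4 c5 c6 c7 c8 c9 by blast
qed

end
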